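(* Let $E_0,E_1,E_2\in\mathcal G$ be mutually distant, and let $W\in\mathcal G$ be adjacent to $E_0$ and not distant from $E_1$ nor from $E_2$. For $i\in\{1,2\}$ let $p_i:=E_i\cap W$, which is a point. Then the line $L=p_1+p_2$ meets $E_0$; that is, $L$ is the unique line through $p_1$ meeting $E_0$ and $E_2$.
   Context: $K$ is a (not necessarily commutative) field and $V$ is a left vector space over $K$ of arbitrary (possibly infinite) dimension with $\dim V>2$. $\mathcal G:=\{X\le V\mid X\cong V/X\}$, assumed nonempty. Points are $1$-dimensional and lines $2$-dimensional subspaces; two subspaces meet if they have a common point. $X,Y\in\mathcal G$ are adjacent if $\dim((X+Y)/X)=\dim((X+Y)/Y)=1$, and distant if $V=X\oplus Y$. *)

theory Defs
  imports Main
begin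

definition lvs :: "('k::division_ring \<Rightarrow> 'v::ab_group_add \<Rightarrow> 'v) \<Rightarrow> bool" where
  "lvs sm \<longleftrightarrow> (\<forall>a b x. sm (a + b) x = sm a x + sm b x)
             \<and> (\<forall>a x y. sm a (x + y) = sm a x + sm a y)
             \<and> (\<forall>a b x. sm (a * b) x = sm a (sm b x))
             \<and> (\<forall>x. sm 1 x = x)"

definition lsubspace :: "('k::division_ring \<Rightarrow> 'v::ab_group_add \<Rightarrow> 'v) \<Rightarrow> 'v set \<Rightarrow> bool" where
  "lsubspace sm X \<longleftrightarrow> 0 \<in> X \<and> (\<forall>x\<in>X. \<forall>y\<in>X. x + y \<in> X) \<and> (\<forall>a. \<forall>x\<in>X. sm a x \<in> X)"

definition span1 :: "('k::division_ring \<Rightarrow> 'v::ab_group_add \<Rightarrow> 'v) \<Rightarrow> 'v \<Rightarrow> 'v set" where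
  "span1 sm v = range (\<lambda>a. sm a v)"

definition sumset :: "'v::ab_group_add set \<Rightarrow> 'v set \<Rightarrow> 'v set" where
  "sumset X Y = {x + y | x y. x \<in> X \<and> y \<in> Y}"

definition is_point :: "('k::division_ring \<Rightarrow> 'v::ab_group_add \<Rightarrow> 'v) \<Rightarrow> 'v set \<Rightarrow> bool" where
  "is_point sm P \<longleftrightarrow> (\<exists>v. v \<noteq> 0 \<and> P = span1 sm v)"

definition is_line :: "('k::division_ring \<Rightarrow> 'v::ab_group_add \<Rightarrow> 'v) \<Rightarrow> 'v set \<Rightarrow> bool" where
  "is_line sm L \<longleftrightarrow> (\<exists>u v. u \<noteq> 0 \<and> v \<notin> span1 sm u \<and> L = sumset (span1 sm u) (span1 sm v))"

definition meets :: "('k::division_ring \<Rightarrow> 'v::ab_group_add \<Rightarrow> 'v) \<Rightarrow> 'v set \<Rightarrow> 'v set \<Rightarrow> bool" where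
  "meets sm X Y \<longleftrightarrow> (\<exists>P. is_point sm P \<and> P \<subseteq> X \<and> P \<subseteq> Y)"

definition dim_gt2 :: "('k::division_ring \<Rightarrow> 'v::ab_group_add \<Rightarrow> 'v) \<Rightarrow> bool" where
  "dim_gt2 sm \<longleftrightarrow> (\<exists>u v w. u \<noteq> 0 \<and> v \<notin> span1 sm u \<and> w \<notin> sumset (span1 sm u) (span1 sm v))"

definition quot_dim1 :: "('k::division_ring \<Rightarrow> 'v::ab_group_add \<Rightarrow> 'v) \<Rightarrow> 'v set \<Rightarrow> 'v set \<Rightarrow> bool" where
  "quot_dim1 sm A B \<longleftrightarrow> B \<subseteq> A \<and> (\<exists>v\<in>A. v \<notin> B \<and> A = sumset B (span1 sm v))"

definition adjacent :: "('k::division_ring \<Rightarrow> 'v::ab_group_add \<Rightarrow> 'v) \<Rightarrow> 'v set \<Rightarrow> 'v set \<Rightarrow> bool" where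
  "adjacent sm X Y \<longleftrightarrow> quot_dim1 sm (sumset X Y) X \<and> quot_dim1 sm (sumset X Y) Y"

definition distant :: "'v::ab_group_add set \<Rightarrow> 'v set \<Rightarrow> bool" where
  "distant X Y \<longleftrightarrow> X \<inter> Y = {0} \<and> sumset X Y = UNIV"

definition coset :: "'v::ab_group_add \<Rightarrow> 'v set \<Rightarrow> 'v set" where
  "coset v X = (\<lambda>x. v + x) ` X"

text \<open>X is isomorphic (as a left vector space) to the quotient space V/X, whose elements are
  the cosets v + X with the induced operations.\<close>
definition iso_quot :: "('k::division_ring \<Rightarrow> 'v::ab_group_add \<Rightarrow> 'v) \<Rightarrow> 'v set \<Rightarrow> bool" where
  "iso_quot sm X \<longleftrightarrow> (\<exists>f. bij_betw f X (range (\<lambda>v. coset v X)) \<and>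
      (\<forall>x\<in>X. \<forall>y\<in>X. \<forall>a u w. f x = coset u X \<longrightarrow> f y = coset w X \<longrightarrow>
          f (x + y) = coset (u + w) X \<and> f (sm a x) = coset (sm a u) X))"

definition inG :: "('k::division_ring \<Rightarrow> 'v::ab_group_add \<Rightarrow> 'v) \<Rightarrow> 'v set \<Rightarrow> bool" where
  "inG sm X \<longleftrightarrow> lsubspace sm X \<and> iso_quot sm X"

end

theory Submission
  imports Defs
begin

locale lv = fixes sm :: "'k::division_ring \<Rightarrow> 'v::ab_group_add \<Rightarrow> 'v" assumes lvs: "lvs sm"
begin
lemma addl: "sm (a + b) x = sm a x + sm b x" using lvs unfolding lvs_def by blast
lemma addr: "sm a (x + y) = sm a x + sm a y" using lvs unfolding lvs_def by blast
lemma mult: "sm (a * b) x = sm a (sm b x)" using lvs unfolding lvs_def by blast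
lemma one: "sm 1 x = x" using lvs unfolding lvs_def by blast
lemma zerol[simp]: "sm 0 x = 0"
proof -
  have "sm 0 x = sm 0 x + sm 0 x" using addl[of 0 0 x] by simp
  thus ?thesis by simp
qed
lemma zeror[simp]: "sm a 0 = 0"
proof -
  have "sm a 0 = sm a 0 + sm a 0" using addr[of a 0 0] by simp
  thus ?thesis by simp
qed
lemma minusl: "sm (-a) x = - sm a x"
proof -
  have "sm (-a) x + sm a x = 0" using addl[of "-a" a x] by simp
  thus ?thesis by (simp add: eq_neg_iff_add_eq_0)
qed
lemma minusr: "sm a (-x) = - sm a x"
proof -
  have "sm a (-x) + sm a x = 0" using addr[of a "-x" x] by simp
  thus ?thesis by (simp add: eq_neg_iff_add_eq_0)
qed
lemma diffr: "sm a (x - y) = sm a x - sm a y"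
  using addr[of a x "-y"] minusr by simp
lemma diffl: "sm (a - b) x = sm a x - sm b x"
  using addl[of a "-b" x] minusl by simp
lemma invc: "a \<noteq> 0 \<Longrightarrow> sm (inverse a) (sm a x) = x"
  by (metis mult one left_inverse)
lemma eqz: "sm a x = 0 \<Longrightarrow> a = 0 \<or> x = 0"
  by (metis invc zeror)

lemma sub_diff: "lsubspace sm X \<Longrightarrow> x \<in> X \<Longrightarrow> y \<in> X \<Longrightarrow> x - y \<in> X"
  unfolding lsubspace_def by (metis diff_conv_add_uminus minusl one)
lemma sub_add: "lsubspace sm X \<Longrightarrow> x \<in> X \<Longrightarrow> y \<in> X \<Longrightarrow> x + y \<in> X"
  unfolding lsubspace_def by blast
lemma sub_sm: "lsubspace sm X \<Longrightarrow> x \<in> X \<Longrightarrow> sm a x \<in> X"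
  unfolding lsubspace_def by blast
lemma sub_0: "lsubspace sm X \<Longrightarrow> 0 \<in> X"
  unfolding lsubspace_def by blast

lemma span_iff: "x \<in> span1 sm v \<longleftrightarrow> (\<exists>a. x = sm a v)" unfolding span1_def by auto
lemma sum_iff: "x \<in> sumset X Y \<longleftrightarrow> (\<exists>a b. a \<in> X \<and> b \<in> Y \<and> x = a + b)" unfolding sumset_def by auto
lemma sum_span_intro: "sm a u + sm b v \<in> sumset (span1 sm u) (span1 sm v)"
  unfolding sumset_def span1_def by blast
lemma sumset_comm: "sumset X Y = sumset Y X" unfolding sumset_def apply auto using add.commute by blast+

lemma dist0: "distant X Y \<Longrightarrow> x \<in> X \<Longrightarrow> x \<in> Y \<Longrightarrow> x = 0" unfolding distant_def by auto
lemma distsum: "distant X Y \<Longrightarrow> \<exists>a b. a \<in> X \<and> b \<in> Y \<and> v = a + b" unfolding distant_def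
  using sum_iff by blast

lemma sum_span_E: "y \<in> sumset (span1 sm u) (span1 sm v) \<Longrightarrow> \<exists>a b. y = sm a u + sm b v"
  unfolding sumset_def span1_def by blast
lemma sum_intro: "a \<in> X \<Longrightarrow> b \<in> Y \<Longrightarrow> a + b \<in> sumset X Y"
  unfolding sumset_def by blast
lemma sum_span2_E: "y \<in> sumset X (span1 sm u) \<Longrightarrow> \<exists>x c. x \<in> X \<and> y = x + sm c u"
  unfolding sumset_def span1_def by blast
lemma codim:
  assumes q: "quot_dim1 sm (sumset X Y) X" and X: "lsubspace sm X"
    and f: "f \<in> Y" "f \<notin> X" and y: "y \<in> Y"
  shows "\<exists>c. y - sm c f \<in> X"
proof -
  obtain u where u: "sumset X Y = sumset X (span1 sm u)"
    using q[unfolded quot_dim1_def] by (elim conjE bexE) (rule that)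
  have X0: "0 \<in> X" using X unfolding lsubspace_def by blast
  have "y \<in> sumset X Y" using sum_intro[OF X0 y] by simp
  hence "y \<in> sumset X (span1 sm u)" using u by simp
  hence "\<exists>x c. x \<in> X \<and> y = x + sm c u" by (rule sum_span2_E)
  then obtain x c where x: "x \<in> X" "y = x + sm c u" by (elim exE conjE) (rule that)
  have "f \<in> sumset X Y" using sum_intro[OF X0 f(1)] by simp
  hence "f \<in> sumset X (span1 sm u)" using u by simp
  hence "\<exists>x c. x \<in> X \<and> f = x + sm c u" by (rule sum_span2_E)
  then obtain x' c' where x': "x' \<in> X" "f = x' + sm c' u" by (elim exE conjE) (rule that)
  have c': "c' \<noteq> 0"
  proof
    assume "c' = 0"
    hence "f = x'" using x' by simp
    hence "f \<in> X" using x' by simp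
    thus False using f by simp
  qed
  have k: "c * inverse c' * c' = c" using c' by (simp add: mult.assoc)
  have "sm (c * inverse c') f = sm (c * inverse c') x' + sm c u"
    by (simp only: x' addr mult[symmetric] k)
  hence "y - sm (c * inverse c') f = x + sm c u - (sm (c * inverse c') x' + sm c u)"
    using x by simp
  hence "y - sm (c * inverse c') f = x - sm (c * inverse c') x'" by simp
  thus ?thesis using sub_diff[OF X x(1) sub_sm[OF X x'(1)]] by (intro exI[of _ "c * inverse c'"]) simp
qed
lemma step:
  assumes "x \<in> sumset (span1 sm a) (span1 sm b)" "x \<notin> span1 sm a"
  shows "sumset (span1 sm a) (span1 sm b) = sumset (span1 sm a) (span1 sm x)"
proof -
  obtain al be where x: "x = sm al a + sm be b" using sum_span_E[OF assms(1)] by (elim exE) (rule that)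
  have be: "be \<noteq> 0"
  proof
    assume "be = 0"
    hence "x = sm al a" using x by simp
    thus False using assms(2) unfolding span1_def by blast
  qed
  show ?thesis
  proof (rule set_eqI, rule iffI)
    fix y assume "y \<in> sumset (span1 sm a) (span1 sm b)"
    hence "\<exists>g d. y = sm g a + sm d b" by (rule sum_span_E)
    then obtain g d where y: "y = sm g a + sm d b" by (elim exE) (rule that)
    have k: "d * inverse be * be = d" using be by (simp add: mult.assoc)
    have "sm (d * inverse be) x = sm (d * inverse be * al) a + sm d b"
      by (simp only: x addr mult[symmetric] k)
    hence "y = sm (g - d * inverse be * al) a + sm (d * inverse be) x"
      using y by (simp add: diffl)
    thus "y \<in> sumset (span1 sm a) (span1 sm x)" using sum_span_intro by simp
  next
    fix y assume "y \<in> sumset (span1 sm a) (span1 sm x)"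
    hence "\<exists>g d. y = sm g a + sm d x" by (rule sum_span_E)
    then obtain g d where y: "y = sm g a + sm d x" by (elim exE) (rule that)
    hence "y = sm (g + d * al) a + sm (d * be) b"
      by (simp only: x addr addl mult add.assoc)
    thus "y \<in> sumset (span1 sm a) (span1 sm b)" using sum_span_intro by simp
  qed
qed
lemma point_part:
  assumes E0: "lsubspace sm E0" and E: "lsubspace sm E" and W: "lsubspace sm W"
    and d: "distant E0 E" and nd: "\<not> distant W E"
    and w: "w \<in> W" "w \<notin> E0"
    and A: "\<And>x. x \<in> W \<Longrightarrow> \<exists>a. x - sm a w \<in> E0"
    and B: "\<And>e f. e \<in> E0 \<Longrightarrow> f \<in> E0 \<Longrightarrow> f \<notin> W \<Longrightarrow> \<exists>c. e - sm c f \<in> W"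
  shows "\<exists>e. e \<noteq> 0 \<and> e \<in> E \<and> e \<in> W \<and> e - w \<in> E0 \<and> E \<inter> W = span1 sm e"
proof -
  have "\<exists>x. x \<noteq> 0 \<and> x \<in> E \<and> x \<in> W"
  proof (rule ccontr)
    assume nx: "\<not> ?thesis"
    have "sumset W E = UNIV"
    proof (rule set_eqI, simp)
      fix v
      obtain e0 e1 where ee: "e0 \<in> E0" "e1 \<in> E" "v = e0 + e1" using distsum[OF d] by blast
      obtain f0 f1 where ff: "f0 \<in> E0" "f1 \<in> E" "w = f0 + f1" using distsum[OF d] by blast
      have "f0 \<notin> W"
      proof
        assume "f0 \<in> W"
        hence "f1 \<in> W" using sub_diff[OF W w(1)] ff by (metis add_diff_cancel_left')
        hence "f1 = 0" using nx ff by blast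
        thus False using w ff by simp
      qed
      then obtain c where c: "e0 - sm c f0 \<in> W" using B ee ff by blast
      have "v = ((e0 - sm c f0) + sm c w) + (e1 - sm c f1)"
        using ee ff by (simp add: addr algebra_simps)
      moreover have "(e0 - sm c f0) + sm c w \<in> W" using sub_add[OF W c sub_sm[OF W w(1)]] .
      moreover have "e1 - sm c f1 \<in> E" using sub_diff[OF E ee(2) sub_sm[OF E ff(2)]] .
      ultimately show "v \<in> sumset W E" using sum_iff by blast
    qed
    moreover have "W \<inter> E = {0}" using nx sub_0[OF W] sub_0[OF E] by blast
    ultimately show False using nd unfolding distant_def by blast
  qed
  then obtain x where x: "x \<noteq> 0" "x \<in> E" "x \<in> W" by blast
  obtain a where a: "x - sm a w \<in> E0" using A x(3) by blast
  have a0: "a \<noteq> 0"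
  proof
    assume "a = 0" hence "x \<in> E0" using a by simp
    thus False using dist0[OF d] x by blast
  qed
  define e where "e = sm (inverse a) x"
  have ew: "e - w = sm (inverse a) (x - sm a w)" using a0 by (simp add: e_def diffr invc)
  have eE0: "e - w \<in> E0" unfolding ew using sub_sm[OF E0 a] .
  have e0: "e \<noteq> 0" using x a0 eqz unfolding e_def by (metis inverse_nonzero_iff_nonzero)
  have eE: "e \<in> E" "e \<in> W" unfolding e_def using sub_sm E W x by auto
  have "E \<inter> W = span1 sm e"
  proof (rule set_eqI, rule iffI)
    fix y assume y: "y \<in> E \<inter> W"
    then obtain b where b: "y - sm b w \<in> E0" using A by blast
    have "y - sm b e = (y - sm b w) - sm b (e - w)" by (simp add: diffr)
    moreover have "(y - sm b w) - sm b (e - w) \<in> E0" using sub_diff[OF E0 b sub_sm[OF E0 eE0]] .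
    ultimately have "y - sm b e \<in> E0" by metis
    moreover have "y - sm b e \<in> E" using y sub_diff[OF E _ sub_sm[OF E eE(1)]] by blast
    ultimately have "y - sm b e = 0" using dist0[OF d] by blast
    thus "y \<in> span1 sm e" using span_iff by auto
  next
    fix y assume "y \<in> span1 sm e"
    thus "y \<in> E \<inter> W" using span_iff sub_sm E W eE by auto
  qed
  thus ?thesis using e0 eE eE0 by blast
qed
end


theorem lemma4p9:
  fixes sm :: "'k::division_ring \<Rightarrow> 'v::ab_group_add \<Rightarrow> 'v"
    and E0 E1 E2 W :: "'v set"
  assumes "lvs sm" and "dim_gt2 sm"
    and "inG sm E0" and "inG sm E1" and "inG sm E2" and "inG sm W"
    and "distant E0 E1" and "distant E0 E2" and "distant E1 E2"
    and "adjacent sm W E0" and "\<not> distant W E1" and "\<not> distant W E2"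
  shows "is_point sm (E1 \<inter> W) \<and> is_point sm (E2 \<inter> W)
    \<and> is_line sm (sumset (E1 \<inter> W) (E2 \<inter> W))
    \<and> meets sm (sumset (E1 \<inter> W) (E2 \<inter> W)) E0
    \<and> (\<forall>L'. is_line sm L' \<and> E1 \<inter> W \<subseteq> L' \<and> meets sm L' E0 \<and> meets sm L' E2
            \<longrightarrow> L' = sumset (E1 \<inter> W) (E2 \<inter> W))"
proof -
  interpret lv sm using assms(1) by unfold_locales
  have S0: "lsubspace sm E0" and S1: "lsubspace sm E1" and S2: "lsubspace sm E2"
    and SW: "lsubspace sm W" using assms(3-6) unfolding inG_def by auto
  have qW: "quot_dim1 sm (sumset W E0) W" and q0: "quot_dim1 sm (sumset W E0) E0"
    using assms(10) unfolding adjacent_def by auto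
  obtain v where v: "v \<in> sumset W E0" "v \<notin> E0" using q0 unfolding quot_dim1_def by blast
  then obtain w e where we: "w \<in> W" "e \<in> E0" "v = w + e" using sum_iff by blast
  have wE0: "w \<notin> E0"
  proof
    assume "w \<in> E0" thus False using sub_add[OF S0 _ we(2)] we v by blast
  qed
  have q0': "quot_dim1 sm (sumset E0 W) E0" using q0 sumset_comm by metis
  have A: "\<And>x. x \<in> W \<Longrightarrow> \<exists>a. x - sm a w \<in> E0" using codim[OF q0' S0 we(1) wE0] by blast
  have B: "\<And>e f. e \<in> E0 \<Longrightarrow> f \<in> E0 \<Longrightarrow> f \<notin> W \<Longrightarrow> \<exists>c. e - sm c f \<in> W"
    using codim[OF qW SW] by blast
  obtain e1 where e1: "e1 \<noteq> 0" "e1 \<in> E1" "e1 \<in> W" "e1 - w \<in> E0" "E1 \<inter> W = span1 sm e1"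
    using point_part[OF S0 S1 SW assms(7) assms(11) we(1) wE0 A B] by blast
  obtain e2 where e2: "e2 \<noteq> 0" "e2 \<in> E2" "e2 \<in> W" "e2 - w \<in> E0" "E2 \<inter> W = span1 sm e2"
    using point_part[OF S0 S2 SW assms(8) assms(12) we(1) wE0 A B] by blast
  have e2n: "e2 \<notin> span1 sm e1"
  proof
    assume "e2 \<in> span1 sm e1"
    then obtain c where "e2 = sm c e1" using span_iff by blast
    hence "e2 \<in> E1" using sub_sm[OF S1 e1(2)] by simp
    thus False using dist0[OF assms(9)] e2 by blast
  qed
  have d12: "e1 - e2 \<in> E0"
  proof -
    have "e1 - e2 = (e1 - w) - (e2 - w)" by simp
    thus ?thesis using sub_diff[OF S0 e1(4) e2(4)] by metis
  qed
  have d12n: "e1 - e2 \<noteq> 0"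
  proof
    assume "e1 - e2 = 0" hence "e1 = e2" by simp
    thus False using dist0[OF assms(9)] e1 e2 by blast
  qed
  have line: "is_line sm (sumset (span1 sm e1) (span1 sm e2))"
    unfolding is_line_def using e1(1) e2n by blast
  have meet: "meets sm (sumset (span1 sm e1) (span1 sm e2)) E0"
    unfolding meets_def
  proof (intro exI conjI)
    show "is_point sm (span1 sm (e1 - e2))" unfolding is_point_def using d12n by blast
    show "span1 sm (e1 - e2) \<subseteq> sumset (span1 sm e1) (span1 sm e2)"
    proof
      fix y assume "y \<in> span1 sm (e1 - e2)"
      then obtain c where "y = sm c (e1 - e2)" using span_iff by blast
      moreover have "sm c (e1 - e2) = sm c e1 + sm (-c) e2" by (simp only: diff_conv_add_uminus addr minusr minusl)
      ultimately have "y = sm c e1 + sm (-c) e2" by simp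
      thus "y \<in> sumset (span1 sm e1) (span1 sm e2)" using sum_span_intro by simp
    qed
    show "span1 sm (e1 - e2) \<subseteq> E0" unfolding span1_def using sub_sm[OF S0 d12] by blast
  qed
  have uniq: "L' = sumset (span1 sm e1) (span1 sm e2)"
    if L: "is_line sm L'" "span1 sm e1 \<subseteq> L'" "meets sm L' E0" "meets sm L' E2" for L'
  proof -
    obtain u t where ut: "u \<noteq> 0" "t \<notin> span1 sm u" "L' = sumset (span1 sm u) (span1 sm t)"
      using L(1)[unfolded is_line_def] by (elim exE conjE) (rule that; assumption)
    have "e1 \<in> span1 sm e1" using span_iff one by metis
    hence e1L: "e1 \<in> L'" using L(2) by auto
    have "\<exists>s. L' = sumset (span1 sm e1) (span1 sm s)"
    proof (cases "e1 \<in> span1 sm u")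
      case False
      hence "L' = sumset (span1 sm u) (span1 sm e1)" using step[of e1 u t] e1L ut(3) by simp
      thus ?thesis using sumset_comm[of "span1 sm u" "span1 sm e1"] by (intro exI[of _ u]) simp
    next
      case True
      have "e1 \<notin> span1 sm t"
      proof
        assume "e1 \<in> span1 sm t"
        then obtain b where b: "e1 = sm b t" using span_iff by blast
        obtain a where a: "e1 = sm a u" using True span_iff by blast
        have b0: "b \<noteq> 0" using b e1(1) by auto
        have "t = sm (inverse b) (sm b t)" using invc b0 by simp
        also have "\<dots> = sm (inverse b * a) u" using a b by (simp add: mult)
        finally have "t = sm (inverse b * a) u" .
        thus False using ut(2) span_iff by blast
      qed
      moreover have tu: "L' = sumset (span1 sm t) (span1 sm u)" using ut(3) sumset_comm[of "span1 sm u" "span1 sm t"] by simp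
      ultimately have "L' = sumset (span1 sm t) (span1 sm e1)" using step[of e1 t u] e1L by simp
      thus ?thesis using sumset_comm[of "span1 sm t" "span1 sm e1"] by (intro exI[of _ t]) simp
    qed
    then obtain s where s: "L' = sumset (span1 sm e1) (span1 sm s)" by (elim exE) (rule that)
    obtain P0 where P0: "is_point sm P0" "P0 \<subseteq> L'" "P0 \<subseteq> E0" using L(3) unfolding meets_def by blast
    then obtain x0 where x0: "x0 \<noteq> 0" "P0 = span1 sm x0" unfolding is_point_def by blast
    have "x0 \<in> P0" using x0(2) span_iff one by metis
    hence x0L: "x0 \<in> L'" "x0 \<in> E0" using P0 by auto
    obtain P2 where P2: "is_point sm P2" "P2 \<subseteq> L'" "P2 \<subseteq> E2" using L(4) unfolding meets_def by blast
    then obtain x2 where x2: "x2 \<noteq> 0" "P2 = span1 sm x2" unfolding is_point_def by blast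
    have "x2 \<in> P2" using x2(2) span_iff one by metis
    hence x2L: "x2 \<in> L'" "x2 \<in> E2" using P2 by auto
    have x0n: "x0 \<notin> span1 sm e1"
    proof
      assume "x0 \<in> span1 sm e1"
      then obtain c where "x0 = sm c e1" using span_iff by blast
      hence "x0 \<in> E1" using sub_sm[OF S1 e1(2)] by simp
      thus False using dist0[OF assms(7)] x0 x0L by blast
    qed
    have L0: "L' = sumset (span1 sm e1) (span1 sm x0)" using step[of x0 e1 s] s x0L x0n by simp
    obtain a b where ab: "x2 = sm a e1 + sm b x0" using x2L(1) L0 sum_iff span_iff by metis
    have a0: "a \<noteq> 0"
    proof
      assume "a = 0" hence "x2 \<in> E0" using ab sub_sm[OF S0 x0L(2)] by simp
      thus False using dist0[OF assms(8)] x2 x2L by blast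
    qed
    have "sm a e2 - x2 = - (sm b x0 + sm a (e1 - e2))" using ab by (simp add: diffr)
    moreover have "sm b x0 + sm a (e1 - e2) \<in> E0"
      using sub_add[OF S0 sub_sm[OF S0 x0L(2)] sub_sm[OF S0 d12]] .
    ultimately have "0 - (sm b x0 + sm a (e1 - e2)) \<in> E0" using sub_diff[OF S0 sub_0[OF S0]] by blast
    hence "sm a e2 - x2 \<in> E0" using \<open>sm a e2 - x2 = _\<close> by simp
    moreover have "sm a e2 - x2 \<in> E2" using sub_diff[OF S2 sub_sm[OF S2 e2(2)] x2L(2)] .
    ultimately have "sm a e2 - x2 = 0" using dist0[OF assms(8)] by blast
    hence "sm a e2 = sm a e1 + sm b x0" using ab by simp
    moreover have "e2 = sm (inverse a) (sm a e2)" using invc a0 by simp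
    ultimately have "e2 = sm (inverse a) (sm a e1 + sm b x0)" by simp
    hence "e2 = e1 + sm (inverse a * b) x0" using a0 by (simp add: addr invc mult)
    hence "e2 = sm 1 e1 + sm (inverse a * b) x0" by (simp add: one)
    hence "e2 \<in> L'" using L0 sum_span_intro by simp
    thus ?thesis using step[of e2 e1 x0] L0 e2n by simp
  qed
  show ?thesis
    unfolding e1(5) e2(5)
  proof (intro conjI allI impI)
    show "is_point sm (span1 sm e1)" "is_point sm (span1 sm e2)"
      unfolding is_point_def using e1 e2 by blast+
    show "is_line sm (sumset (span1 sm e1) (span1 sm e2))" by (rule line)
    show "meets sm (sumset (span1 sm e1) (span1 sm e2)) E0" by (rule meet)
  next
    fix L' assume "is_line sm L' \<and> span1 sm e1 \<subseteq> L' \<and> meets sm L' E0 \<and> meets sm L' E2"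
    thus "L' = sumset (span1 sm e1) (span1 sm e2)" using uniq by blast
  qed
qed

end
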